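(* Fix $n\ge2$ and $B>0$. Let $\pi_0$ be any prior distribution on $\Theta(B)$; draw $(\tau,\mu_{\mathrm{L}},\mu_{\mathrm{R}})\sim\pi_0$ and then $\boldsymbol{X}\sim P(n,\tau,\mu_{\mathrm{L}},\mu_{\mathrm{R}})$, and define $Y=\mathbb{1}\{\mu_{\mathrm{L}}\ne\mu_{\mathrm{R}}\}$. For $\lambda=B\sqrt{n}/2$, the classifier $h^{\mathrm{CUSUM}}_\lambda(\boldsymbol{x})=\mathbb{1}\{\|\mathcal{C}(\boldsymbol{x})\|_\infty>\lambda\}$ satisfies $\mathbb{P}(h^{\mathrm{CUSUM}}_\lambda(\boldsymbol{X})\ne Y)\le n e^{-nB^2/8}$.
   Context: $P(n,\tau,\mu_{\mathrm{L}},\mu_{\mathrm{R}})$ is the law of $N_n(\boldsymbol{\mu},I_n)$ with $\mu_i=\mu_{\mathrm{L}}\mathbb{1}\{i\le\tau\}+\mu_{\mathrm{R}}\mathbb{1}\{i>\tau\}$. $\Theta(B)=\{(\tau,\mu_{\mathrm{L}},\mu_{\mathrm{R}})\in[n-1]\times\mathbb{R}\times\mathbb{R}: |\mu_{\mathrm{L}}-\mu_{\mathrm{R}}|\sqrt{\tau(n-\tau)}/n\in\{0\}\cup(B,\infty)\}$. For $i\in[n-1]$, $\boldsymbol{v}_i=\bigl(\sqrt{\tfrac{n-i}{in}}\boldsymbol{1}_i^\top,-\sqrt{\tfrac{i}{(n-i)n}}\boldsymbol{1}_{n-i}^\top\bigr)^\top$ and $\mathcal{C}(\boldsymbol{x})=(\boldsymbol{v}_1^\top\boldsymbol{x},\ldots,\boldsymbol{v}_{n-1}^\top\boldsymbol{x})^\top$.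 *)

theory Defs
  imports "HOL-Probability.Probability"
begin

definition cp_mean :: "nat \<Rightarrow> real \<Rightarrow> real \<Rightarrow> nat \<Rightarrow> real" where
  "cp_mean \<tau> muL muR i = (if i \<le> \<tau> then muL else muR)"

definition cpP :: "nat \<Rightarrow> nat \<Rightarrow> real \<Rightarrow> real \<Rightarrow> (nat \<Rightarrow> real) measure" where
  "cpP n \<tau> muL muR =
     PiM {1..n} (\<lambda>i. density lborel (normal_density (cp_mean \<tau> muL muR i) 1))"

definition Theta :: "nat \<Rightarrow> real \<Rightarrow> (nat \<times> real \<times> real) set" where
  "Theta n B = {(\<tau>, muL, muR). \<tau> \<in> {1..n-1} \<and>
     (let s = \<bar>muL - muR\<bar> * sqrt (real \<tau> * real (n - \<tau>)) / real n in s = 0 \<or> s > B)}"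

definition cusum_vec :: "nat \<Rightarrow> nat \<Rightarrow> nat \<Rightarrow> real" where
  "cusum_vec n i j = (if j \<le> i then sqrt (real (n - i) / (real i * real n))
                      else - sqrt (real i / (real (n - i) * real n)))"

definition cusum :: "nat \<Rightarrow> (nat \<Rightarrow> real) \<Rightarrow> nat \<Rightarrow> real" where
  "cusum n x i = (\<Sum>j = 1..n. cusum_vec n i j * x j)"

definition cusum_supnorm :: "nat \<Rightarrow> (nat \<Rightarrow> real) \<Rightarrow> real" where
  "cusum_supnorm n x = Max ((\<lambda>i. \<bar>cusum n x i\<bar>) ` {1..n-1})"

definition h_cusum :: "nat \<Rightarrow> real \<Rightarrow> (nat \<Rightarrow> real) \<Rightarrow> bool" where
  "h_cusum n lam x = (cusum_supnorm n x > lam)"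

end

theory Submission
  imports Defs
begin

lemma N0_prob: "prob_space (density lborel std_normal_density)"
  by (rule prob_space_normal_density) simp

lemma N0_id: "distributed (density lborel std_normal_density) lborel (\<lambda>x. x) std_normal_density"
  unfolding distributed_def
  by (auto simp: distr_id2)

lemma N0_half: "emeasure (density lborel std_normal_density) {0<..} \<le> ennreal (1/2)"
proof -
  let ?N = "density lborel std_normal_density"
  interpret N: prob_space ?N by (rule N0_prob)
  have d: "distributed ?N lborel (\<lambda>x. 0 + (-1) * x) (normal_density (0 + (-1) * 0) (\<bar>-1\<bar> * 1))"
    by (rule N.normal_density_affine[OF N0_id]) auto
  have "emeasure ?N ((\<lambda>x. 0 + (-1) * x) -` {..<0} \<inter> space ?N) = (\<integral>\<^sup>+x. ennreal (std_normal_density x) * indicator {..<0} x \<partial>lborel)"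
    using distributed_emeasure[OF d, of "{..<0}"] by simp
  also have "\<dots> = emeasure ?N {..<0}"
    by (simp add: emeasure_density)
  finally have eq: "emeasure ?N {0<..} = emeasure ?N {..<0}"
    by (simp add: vimage_def greaterThan_def lessThan_def)
  have "measure ?N {0<..} + measure ?N {..<0} = measure ?N ({0<..} \<union> {..<0})"
    by (subst N.finite_measure_Union) auto
  also have "\<dots> \<le> 1" by simp
  finally have "measure ?N {0<..} \<le> 1/2"
    using eq by (simp add: N.emeasure_eq_measure)
  then have "ennreal (measure ?N {0<..}) \<le> ennreal (1/2)" by (rule ennreal_leI)
  thus ?thesis by (simp only: N.emeasure_eq_measure)
qed

lemma pt_aux:
  fixes t x :: real assumes t: "t \<ge> 0" and x: "x > t"
  shows "std_normal_density x \<le> exp (-t\<^sup>2/2) * normal_density t 1 x"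
proof -
  have id: "x\<^sup>2 = t\<^sup>2 + (x-t)\<^sup>2 + 2*t*(x-t)" by algebra
  have "2*t*(x-t) \<ge> 0" using t x by simp
  hence "- x\<^sup>2 / 2 \<le> -t\<^sup>2/2 + (- (x - t)\<^sup>2 / 2)" using id by linarith
  hence e: "exp (- x\<^sup>2 / 2) \<le> exp (-t\<^sup>2/2) * exp (- (x - t)\<^sup>2 / 2)"
    by (simp only: exp_add[symmetric] exp_le_cancel_iff)
  have n1: "normal_density t 1 x = exp (- (x - t)\<^sup>2 / 2) / sqrt (2 * pi)"
    by (simp add: normal_density_def)
  have n0: "std_normal_density x = exp (- x\<^sup>2 / 2) / sqrt (2 * pi)"
    by (simp add: std_normal_density_def)
  show ?thesis unfolding n0 n1
    using divide_right_mono[OF e, of "sqrt (2*pi)"] by simp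
qed

lemma std_tail:
  fixes t :: real assumes t: "t \<ge> 0"
  shows "emeasure (density lborel std_normal_density) {t<..} \<le> ennreal (exp (-t\<^sup>2/2) / 2)"
proof -
  let ?N = "density lborel std_normal_density"
  interpret N: prob_space ?N by (rule N0_prob)
  have d: "distributed ?N lborel (\<lambda>x. t + 1 * x) (normal_density (t + 1 * 0) (\<bar>1\<bar> * 1))"
    by (rule N.normal_density_affine[OF N0_id]) auto
  have sh: "emeasure ?N {0<..} = (\<integral>\<^sup>+x. ennreal (normal_density t 1 x) * indicator {t<..} x \<partial>lborel)"
    using distributed_emeasure[OF d, of "{t<..}"] by (simp add: vimage_def greaterThan_def)
  have pt: "std_normal_density x * indicator {t<..} x \<le> exp (-t\<^sup>2/2) * (normal_density t 1 x * indicator {t<..} x)" for x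
    using pt_aux[OF t, of x] by (cases "x > t") (simp_all add: indicator_def)
  have "emeasure ?N {t<..} = (\<integral>\<^sup>+x. ennreal (std_normal_density x) * indicator {t<..} x \<partial>lborel)"
    by (simp add: emeasure_density)
  also have "\<dots> \<le> (\<integral>\<^sup>+x. ennreal (exp (-t\<^sup>2/2)) * (ennreal (normal_density t 1 x) * indicator {t<..} x) \<partial>lborel)"
  proof (rule nn_integral_mono)
    fix x
    have "ennreal (std_normal_density x) * indicator {t<..} x = ennreal (std_normal_density x * indicator {t<..} x)"
      by (simp add: indicator_def)
    also have "\<dots> \<le> ennreal (exp (-t\<^sup>2/2) * (normal_density t 1 x * indicator {t<..} x))"
      using pt by (rule ennreal_leI)
    also have "\<dots> = ennreal (exp (-t\<^sup>2/2)) * (ennreal (normal_density t 1 x) * indicator {t<..} x)"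
      by (simp add: indicator_def ennreal_mult'')
    finally show "ennreal (std_normal_density x) * indicator {t<..} x \<le> \<dots>" .
  qed
  also have "\<dots> = ennreal (exp (-t\<^sup>2/2)) * emeasure ?N {0<..}"
    by (subst nn_integral_cmult) (auto simp: sh)
  also have "\<dots> \<le> ennreal (exp (-t\<^sup>2/2)) * ennreal (1/2)"
    by (intro mult_left_mono N0_half) auto
  also have "\<dots> = ennreal (exp (-t\<^sup>2/2) * (1/2))"
    by (rule ennreal_mult[symmetric]) auto
  also have "\<dots> = ennreal (exp (-t\<^sup>2/2) / 2)"
    by simp
  finally show ?thesis .
qed

lemma tail_rv:
  assumes P: "prob_space M" and Y: "distributed M lborel Y (normal_density m 1)" and t: "t \<ge> 0"
  shows "emeasure M {x\<in>space M. Y x > m + t} \<le> ennreal (exp (-t\<^sup>2/2) / 2)"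
    and "emeasure M {x\<in>space M. Y x < m - t} \<le> ennreal (exp (-t\<^sup>2/2) / 2)"
proof -
  interpret prob_space M by (rule P)
  have d1: "distributed M lborel (\<lambda>x. -m + 1 * Y x) (normal_density (-m + 1 * m) (\<bar>1\<bar> * 1))"
    by (rule normal_density_affine[OF Y]) auto
  have "emeasure M ((\<lambda>x. -m + 1 * Y x) -` {t<..} \<inter> space M) = (\<integral>\<^sup>+x. ennreal (std_normal_density x) * indicator {t<..} x \<partial>lborel)"
    using distributed_emeasure[OF d1, of "{t<..}"] by simp
  also have "\<dots> = emeasure (density lborel std_normal_density) {t<..}"
    by (simp add: emeasure_density)
  also have "(\<lambda>x. -m + 1 * Y x) -` {t<..} \<inter> space M = {x\<in>space M. Y x > m + t}"
    by auto
  finally show "emeasure M {x\<in>space M. Y x > m + t} \<le> ennreal (exp (-t\<^sup>2/2) / 2)"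
    using std_tail[OF t] by simp
  have d2: "distributed M lborel (\<lambda>x. m + (-1) * Y x) (normal_density (m + (-1) * m) (\<bar>-1\<bar> * 1))"
    by (rule normal_density_affine[OF Y]) auto
  have "emeasure M ((\<lambda>x. m + (-1) * Y x) -` {t<..} \<inter> space M) = (\<integral>\<^sup>+x. ennreal (std_normal_density x) * indicator {t<..} x \<partial>lborel)"
    using distributed_emeasure[OF d2, of "{t<..}"] by simp
  also have "\<dots> = emeasure (density lborel std_normal_density) {t<..}"
    by (simp add: emeasure_density)
  also have "(\<lambda>x. m + (-1) * Y x) -` {t<..} \<inter> space M = {x\<in>space M. Y x < m - t}"
    by auto
  finally show "emeasure M {x\<in>space M. Y x < m - t} \<le> ennreal (exp (-t\<^sup>2/2) / 2)"
    using std_tail[OF t] by simp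
qed


lemma coord_distributed:
  assumes j: "j \<in> I"
  shows "distributed (PiM I (\<lambda>j. density lborel (normal_density (m j) 1))) lborel (\<lambda>x. x j) (normal_density (m j) 1)"
proof -
  let ?N = "\<lambda>j. density lborel (normal_density (m j) 1)"
  have pr: "\<And>j. j \<in> I \<Longrightarrow> prob_space (?N j)" by (rule prob_space_normal_density) simp
  have meas: "(\<lambda>x. x j) \<in> measurable (PiM I ?N) (?N j)"
    using j by (rule measurable_component_singleton)
  have meas2: "(\<lambda>x. x j) \<in> measurable (PiM I ?N) lborel"
    using meas by (simp add: measurable_cong_sets[OF refl, of "?N j" lborel])
  have "distr (PiM I ?N) lborel (\<lambda>x. x j) = distr (PiM I ?N) (?N j) (\<lambda>x. x j)"
    by (rule distr_cong) auto
  also have "\<dots> = ?N j" by (rule distr_PiM_component[OF pr j])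
  finally show ?thesis unfolding distributed_def using meas2 by simp
qed

lemma coord_indep:
  assumes I: "I \<noteq> {}"
  shows "prob_space.indep_vars (PiM I (\<lambda>j. density lborel (normal_density (m j) 1))) (\<lambda>j. borel) (\<lambda>j x. x j) I"
proof -
  let ?N = "\<lambda>j. density lborel (normal_density (m j) 1)"
  let ?M = "PiM I ?N"
  have pr: "\<And>j. j \<in> I \<Longrightarrow> prob_space (?N j)" by (rule prob_space_normal_density) simp
  interpret prob_space ?M by (rule prob_space_PiM) (rule pr)
  have rv: "\<And>j. j \<in> I \<Longrightarrow> random_variable borel (\<lambda>x. x j)"
    using coord_distributed[of _ I m] by (auto dest: distributed_measurable simp: measurable_cong_sets[OF refl, of lborel borel])
  show ?thesis
  proof (subst indep_vars_iff_distr_eq_PiM'[OF I rv])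
    show "distr ?M (PiM I (\<lambda>j. borel)) (\<lambda>x. \<lambda>j\<in>I. x j) = PiM I (\<lambda>j. distr ?M borel (\<lambda>x. x j))"
    proof -
      have "distr ?M (PiM I (\<lambda>j. borel)) (\<lambda>x. \<lambda>j\<in>I. x j) = distr ?M ?M (\<lambda>x. x)"
        by (rule distr_cong) (auto intro!: sets_PiM_cong simp: space_PiM PiE_def extensional_restrict)
      also have "\<dots> = ?M" by (rule distr_id2) simp
      also have "\<dots> = PiM I (\<lambda>j. distr ?M (?N j) (\<lambda>x. x j))"
      proof (rule PiM_cong)
        fix j assume "j \<in> I"
        then show "?N j = distr ?M (?N j) (\<lambda>x. x j)"
          by (intro distr_PiM_component[symmetric] pr)
      qed simp
      also have "\<dots> = PiM I (\<lambda>j. distr ?M borel (\<lambda>x. x j))"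
        by (rule PiM_cong) (auto intro!: distr_cong)
      finally show ?thesis .
    qed
  qed simp
qed

lemma sum_split_if:
  assumes "i \<le> n"
  shows "(\<Sum>j=1..n. if j \<le> i then u else v) = real i * u + real (n - i) * (v::real)"
proof -
  have "(\<Sum>j=1..n. if j \<le> i then u else v) = (\<Sum>j\<in>{1..n} \<inter> {j. j \<le> i}. u) + (\<Sum>j\<in>{1..n} \<inter> - {j. j \<le> i}. v)"
    by (rule sum.If_cases) simp
  also have "{1..n} \<inter> {j. j \<le> i} = {1..i}" using assms by auto
  also have "{1..n} \<inter> - {j. j \<le> i} = {i<..n}" by auto
  finally show ?thesis by simp
qed

lemma cv_facts:
  fixes p q :: real assumes p: "p > 0" and q: "q > 0"
  shows "p * sqrt (q / (p * (p + q))) = sqrt (p * q / (p + q))"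
    and "q * sqrt (p / (q * (p + q))) = sqrt (p * q / (p + q))"
    and "p * (sqrt (q / (p * (p + q))))\<^sup>2 + q * (sqrt (p / (q * (p + q))))\<^sup>2 = 1"
proof -
  have pq: "p + q > 0" "p + q \<noteq> 0" using p q by auto
  have "p * sqrt (q / (p * (p + q))) = sqrt (p\<^sup>2) * sqrt (q / (p * (p + q)))" using p by simp
  also have "\<dots> = sqrt (p\<^sup>2 * (q / (p * (p + q))))" by (rule real_sqrt_mult[symmetric])
  also have "p\<^sup>2 * (q / (p * (p + q))) = p * (p * q) / (p * (p + q))" by (simp add: power2_eq_square)
  also have "\<dots> = p * q / (p + q)" using p by (intro mult_divide_mult_cancel_left) simp
  finally show "p * sqrt (q / (p * (p + q))) = sqrt (p * q / (p + q))" .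
  have "q * sqrt (p / (q * (p + q))) = sqrt (q\<^sup>2) * sqrt (p / (q * (p + q)))" using q by simp
  also have "\<dots> = sqrt (q\<^sup>2 * (p / (q * (p + q))))" by (rule real_sqrt_mult[symmetric])
  also have "q\<^sup>2 * (p / (q * (p + q))) = q * (p * q) / (q * (p + q))" by (simp add: power2_eq_square mult.commute)
  also have "\<dots> = p * q / (p + q)" using q by (intro mult_divide_mult_cancel_left) simp
  finally show "q * sqrt (p / (q * (p + q))) = sqrt (p * q / (p + q))" .
  show "p * (sqrt (q / (p * (p + q))))\<^sup>2 + q * (sqrt (p / (q * (p + q))))\<^sup>2 = 1"
  proof -
    have e1: "p * (q / (p * (p + q))) = q / (p + q)"
      using mult_divide_mult_cancel_left[of p q "p + q"] p by simp
    have e2: "q * (p / (q * (p + q))) = p / (p + q)"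
      using mult_divide_mult_cancel_left[of q p "p + q"] q by simp
    have "q / (p + q) + p / (p + q) = (q + p) / (p + q)" by (rule add_divide_distrib[symmetric])
    also have "\<dots> = 1" using pq by simp
    finally show ?thesis using p q e1 e2 by simp
  qed
qed

lemma cusum_distributed:
  assumes i: "1 \<le> i" "i < n"
  shows "distributed (cpP n \<tau> a b) lborel (\<lambda>x. cusum n x i)
           (normal_density (\<Sum>j=1..n. cusum_vec n i j * cp_mean \<tau> a b j) 1)"
proof -
  let ?m = "cp_mean \<tau> a b"
  let ?N = "\<lambda>j. density lborel (normal_density (?m j) 1)"
  let ?M = "PiM {1..n} ?N"
  let ?I = "{1..n::nat}"
  define c where "c = cusum_vec n i"
  have pr: "\<And>j. j \<in> ?I \<Longrightarrow> prob_space (?N j)" by (rule prob_space_normal_density) simp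
  interpret prob_space ?M by (rule prob_space_PiM) (rule pr)
  have pos: "real i > 0" "real (n - i) > 0" "real n > 0" using i by auto
  have c0: "c j \<noteq> 0" for j
    using pos by (auto simp: c_def cusum_vec_def)
  have Xd: "distributed ?M lborel (\<lambda>x. c j * x j) (normal_density (c j * ?m j) \<bar>c j\<bar>)" if j: "j \<in> ?I" for j
    using normal_density_affine[OF coord_distributed[OF j, of ?m], of "c j" 0] c0 by simp
  have ind: "indep_vars (\<lambda>_. borel) (\<lambda>j x. c j * x j) ?I"
    using indep_vars_compose2[OF coord_indep[of ?I ?m], of "\<lambda>j y. c j * y" "\<lambda>_. borel"] i by simp
  have S: "distributed ?M lborel (\<lambda>x. \<Sum>j\<in>?I. c j * x j)
            (normal_density (\<Sum>j\<in>?I. c j * ?m j) (sqrt (\<Sum>j\<in>?I. \<bar>c j\<bar>\<^sup>2)))"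
    by (rule sum_indep_normal[OF _ _ ind]) (use i c0 Xd in auto)
  have "(\<Sum>j\<in>?I. \<bar>c j\<bar>\<^sup>2) = (\<Sum>j=1..n. if j \<le> i then (sqrt (real (n - i) / (real i * real n)))\<^sup>2 else (sqrt (real i / (real (n - i) * real n)))\<^sup>2)"
    by (rule sum.cong) (auto simp: c_def cusum_vec_def)
  also have "\<dots> = 1"
  proof -
    have nn: "real n = real i + real (n - i)" using i by simp
    show ?thesis
      apply (subst sum_split_if) using i apply simp
      apply (subst (1 2) nn)
      using cv_facts(3)[OF pos(1,2)] by simp
  qed
  finally have s1: "sqrt (\<Sum>j\<in>?I. \<bar>c j\<bar>\<^sup>2) = 1" by simp
  have "(\<lambda>x. cusum n x i) = (\<lambda>x. \<Sum>j\<in>?I. c j * x j)"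
    by (simp add: cusum_def c_def)
  then show ?thesis using S s1 by (simp add: cpP_def c_def)
qed

lemma cusum_mean:
  assumes i: "1 \<le> i" "i < n"
  shows "(\<Sum>j=1..n. cusum_vec n i j * cp_mean i a b j) = (a - b) * sqrt (real i * real (n - i) / real n)"
proof -
  have pos: "real i > 0" "real (n - i) > 0" using i by auto
  have nn: "real n = real i + real (n - i)" using i by simp
  have f1: "real i * sqrt (real (n - i) / (real i * real n)) = sqrt (real i * real (n - i) / real n)"
    using cv_facts(1)[OF pos] unfolding nn[symmetric] .
  have f2: "real (n - i) * sqrt (real i / (real (n - i) * real n)) = sqrt (real i * real (n - i) / real n)"
    using cv_facts(2)[OF pos] unfolding nn[symmetric] .
  have gen: "\<And>x y z w a b::real. x*(y*a) + z*(-w*b) = (x*y)*a - (z*w)*b" by algebra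
  have "(\<Sum>j=1..n. cusum_vec n i j * cp_mean i a b j) =
        (\<Sum>j=1..n. if j \<le> i then sqrt (real (n - i) / (real i * real n)) * a
                   else - sqrt (real i / (real (n - i) * real n)) * b)"
    by (rule sum.cong) (auto simp: cusum_vec_def cp_mean_def)
  also have "\<dots> = real i * (sqrt (real (n - i) / (real i * real n)) * a)
                 + real (n - i) * (- sqrt (real i / (real (n - i) * real n)) * b)"
    by (rule sum_split_if) (use i in simp)
  also have "\<dots> = (real i * sqrt (real (n - i) / (real i * real n))) * a
                 - (real (n - i) * sqrt (real i / (real (n - i) * real n))) * b"
    by (rule gen)
  also have "\<dots> = (a - b) * sqrt (real i * real (n - i) / real n)"
    unfolding f1 f2 by (simp add: algebra_simps)
  finally show ?thesis .
qed

lemma cusum_mean_null: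
  assumes i: "1 \<le> i" "i < n"
  shows "(\<Sum>j=1..n. cusum_vec n i j * cp_mean \<tau> a a j) = 0"
proof -
  have "(\<Sum>j=1..n. cusum_vec n i j * cp_mean \<tau> a a j) = (\<Sum>j=1..n. cusum_vec n i j * cp_mean i a a j)"
    by (simp add: cp_mean_def)
  also have "\<dots> = 0" using cusum_mean[OF i, of a a] by simp
  finally show ?thesis .
qed

lemma h_iff:
  assumes n: "n \<ge> 2"
  shows "h_cusum n lam x \<longleftrightarrow> (\<exists>i\<in>{1..n-1}. lam < \<bar>cusum n x i\<bar>)"
proof -
  have "{1..n-1} \<noteq> {}" using n by auto
  then show ?thesis
    unfolding h_cusum_def cusum_supnorm_def by (subst Max_gr_iff) auto
qed

lemma per_theta:
  assumes n: "n \<ge> 2" and B: "B > 0" and th: "(\<tau>, a, b) \<in> Theta n B"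
  shows "emeasure (cpP n \<tau> a b) {x \<in> space (cpP n \<tau> a b). h_cusum n (B * sqrt (real n) / 2) x \<noteq> (a \<noteq> b)}
           \<le> ennreal (real n * exp (- real n * B^2 / 8))"
proof -
  let ?M = "cpP n \<tau> a b"
  define lam where "lam = B * sqrt (real n) / 2"
  define E where "E = exp (- real n * B^2 / 8)"
  have lam0: "lam \<ge> 0" using B by (simp add: lam_def)
  have lamE: "exp (-lam\<^sup>2/2) = E"
    unfolding lam_def E_def by (simp add: power_mult_distrib power_divide algebra_simps)
  have E0: "E \<ge> 0" by (simp add: E_def)
  have P: "prob_space ?M"
    unfolding cpP_def by (rule prob_space_PiM) (rule prob_space_normal_density, simp)
  interpret prob_space ?M by (rule P)
  have tau: "1 \<le> \<tau>" "\<tau> < n" and sB: "let s = \<bar>a - b\<bar> * sqrt (real \<tau> * real (n - \<tau>)) / real n in s = 0 \<or> s > B"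
    using th n by (auto simp: Theta_def)
  have Yd: "distributed ?M lborel (\<lambda>x. cusum n x i) (normal_density (\<Sum>j=1..n. cusum_vec n i j * cp_mean \<tau> a b j) 1)"
    if "1 \<le> i" "i < n" for i
    by (rule cusum_distributed) (use that in auto)
  have Ym[measurable]: "(\<lambda>x. cusum n x i) \<in> borel_measurable ?M" if "1 \<le> i" "i < n" for i
    using distributed_measurable[OF Yd[OF that]] by (simp add: measurable_cong_sets[OF refl, of lborel borel])
  show ?thesis
  proof (cases "a = b")
    case True
    have eqset: "{x \<in> space ?M. h_cusum n lam x \<noteq> (a \<noteq> b)} = (\<Union>i\<in>{1..n-1}. {x \<in> space ?M. lam < \<bar>cusum n x i\<bar>})"
      using True h_iff[OF n] by auto
    have each: "emeasure ?M {x \<in> space ?M. lam < \<bar>cusum n x i\<bar>} \<le> ennreal E" if i: "i \<in> {1..n-1}" for i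
    proof -
      have i': "1 \<le> i" "i < n" using i n by auto
      note Ymi[measurable] = Ym[OF i']
      have Y0: "distributed ?M lborel (\<lambda>x. cusum n x i) (normal_density 0 1)"
        using Yd[OF i'] cusum_mean_null[OF i', of \<tau> a] True by simp
      have "emeasure ?M {x \<in> space ?M. lam < \<bar>cusum n x i\<bar>}
            \<le> emeasure ?M ({x \<in> space ?M. cusum n x i > 0 + lam} \<union> {x \<in> space ?M. cusum n x i < 0 - lam})"
        by (rule emeasure_mono) auto
      also have "\<dots> \<le> emeasure ?M {x \<in> space ?M. cusum n x i > 0 + lam} + emeasure ?M {x \<in> space ?M. cusum n x i < 0 - lam}"
        by (rule emeasure_subadditive) measurable
      also have "\<dots> \<le> ennreal (exp (-lam\<^sup>2/2) / 2) + ennreal (exp (-lam\<^sup>2/2) / 2)"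
        by (intro add_mono tail_rv[OF P Y0 lam0])
      also have "\<dots> = ennreal E"
        unfolding lamE using E0 by (simp add: ennreal_plus[symmetric] del: ennreal_plus)
      finally show ?thesis .
    qed
    have "emeasure ?M {x \<in> space ?M. h_cusum n lam x \<noteq> (a \<noteq> b)}
          \<le> (\<Sum>i\<in>{1..n-1}. emeasure ?M {x \<in> space ?M. lam < \<bar>cusum n x i\<bar>})"
      unfolding eqset
    proof (rule emeasure_subadditive_finite)
      show "(\<lambda>i. {x \<in> space ?M. lam < \<bar>cusum n x i\<bar>}) ` {1..n-1} \<subseteq> sets ?M"
      proof safe
        fix i assume "i \<in> {1..n-1}"
        then have i': "1 \<le> i" "i < n" using n by auto
        note Ymi[measurable] = Ym[OF i']
        show "{x \<in> space ?M. lam < \<bar>cusum n x i\<bar>} \<in> sets ?M" by measurable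
      qed
    qed simp
    also have "\<dots> \<le> (\<Sum>i\<in>{1..n-1}. ennreal E)"
      by (rule sum_mono) (rule each)
    also have "\<dots> = ennreal (real (n - 1) * E)"
      using E0 by (simp add: ennreal_mult ennreal_of_nat_eq_real_of_nat)
    also have "\<dots> \<le> ennreal (real n * E)"
      using E0 by (intro ennreal_leI mult_right_mono) auto
    finally show ?thesis unfolding lam_def E_def .
  next
    case False
    have i': "1 \<le> \<tau>" "\<tau> < n" using tau by auto
    note Ymi[measurable] = Ym[OF i']
    have tin: "\<tau> \<in> {1..n-1}" using i' by auto
    define m where "m = (\<Sum>j=1..n. cusum_vec n \<tau> j * cp_mean \<tau> a b j)"
    have Ydm: "distributed ?M lborel (\<lambda>x. cusum n x \<tau>) (normal_density m 1)"
      unfolding m_def by (rule Yd[OF i'])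
    have mval: "m = (a - b) * sqrt (real \<tau> * real (n - \<tau>) / real n)"
      unfolding m_def by (rule cusum_mean[OF i'])
    define s where "s = \<bar>a - b\<bar> * sqrt (real \<tau> * real (n - \<tau>)) / real n"
    have spos: "s > 0" using False i' by (simp add: s_def)
    have sB': "s > B" using sB spos False i' n by (simp add: s_def Let_def)
    have sqn: "sqrt (real n) > 0" using n by simp
    have "\<bar>m\<bar> = s * sqrt (real n)"
    proof -
      have "\<bar>m\<bar> = \<bar>a - b\<bar> * (sqrt (real \<tau> * real (n - \<tau>)) / sqrt (real n))"
        by (simp add: mval abs_mult real_sqrt_divide)
      also have "sqrt (real \<tau> * real (n - \<tau>)) / sqrt (real n) = sqrt (real \<tau> * real (n - \<tau>)) / real n * sqrt (real n)"
        using sqn by (simp add: field_simps)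
      finally show ?thesis by (simp add: s_def)
    qed
    then have mbig: "\<bar>m\<bar> > 2 * lam"
      using sB' sqn by (simp add: lam_def)
    have "emeasure ?M {x \<in> space ?M. h_cusum n lam x \<noteq> (a \<noteq> b)} \<le> ennreal (exp (-lam\<^sup>2/2) / 2)"
    proof (cases "m > 0")
      case True
      have "emeasure ?M {x \<in> space ?M. h_cusum n lam x \<noteq> (a \<noteq> b)} \<le> emeasure ?M {x \<in> space ?M. cusum n x \<tau> < m - lam}"
      proof (rule emeasure_mono)
        show "{x \<in> space ?M. h_cusum n lam x \<noteq> (a \<noteq> b)} \<subseteq> {x \<in> space ?M. cusum n x \<tau> < m - lam}"
        proof
          fix x assume "x \<in> {x \<in> space ?M. h_cusum n lam x \<noteq> (a \<noteq> b)}"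
          then have xx: "x \<in> space ?M \<and> (h_cusum n lam x \<noteq> (a \<noteq> b))" by (rule CollectD)
          have x: "x \<in> space ?M" using xx by (rule conjunct1)
          have "\<not> h_cusum n lam x" using conjunct2[OF xx] False by simp
          then have "\<not> lam < \<bar>cusum n x \<tau>\<bar>" using h_iff[OF n, of lam x] tin by blast
          then have c: "cusum n x \<tau> < m - lam" using True mbig by linarith
          show "x \<in> {x \<in> space ?M. cusum n x \<tau> < m - lam}" using x c by (intro CollectI conjI)
        qed
      qed measurable
      also have "\<dots> \<le> ennreal (exp (-lam\<^sup>2/2) / 2)" by (rule tail_rv(2)[OF P Ydm lam0])
      finally show ?thesis .
    next
      case False2: False
      have "emeasure ?M {x \<in> space ?M. h_cusum n lam x \<noteq> (a \<noteq> b)} \<le> emeasure ?M {x \<in> space ?M. cusum n x \<tau> > m + lam}"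
      proof (rule emeasure_mono)
        show "{x \<in> space ?M. h_cusum n lam x \<noteq> (a \<noteq> b)} \<subseteq> {x \<in> space ?M. cusum n x \<tau> > m + lam}"
        proof
          fix x assume "x \<in> {x \<in> space ?M. h_cusum n lam x \<noteq> (a \<noteq> b)}"
          then have xx: "x \<in> space ?M \<and> (h_cusum n lam x \<noteq> (a \<noteq> b))" by (rule CollectD)
          have x: "x \<in> space ?M" using xx by (rule conjunct1)
          have "\<not> h_cusum n lam x" using conjunct2[OF xx] False by simp
          then have "\<not> lam < \<bar>cusum n x \<tau>\<bar>" using h_iff[OF n, of lam x] tin by blast
          then have c: "cusum n x \<tau> > m + lam" using False2 mbig by linarith
          show "x \<in> {x \<in> space ?M. cusum n x \<tau> > m + lam}" using x c by (intro CollectI conjI)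
        qed
      qed measurable
      also have "\<dots> \<le> ennreal (exp (-lam\<^sup>2/2) / 2)" by (rule tail_rv(1)[OF P Ydm lam0])
      finally show ?thesis .
    qed
    also have "\<dots> \<le> ennreal (real n * E)"
    proof (intro ennreal_leI)
      have "exp (-lam\<^sup>2/2) / 2 \<le> 1 * E" unfolding lamE using E0 by simp
      also have "1 * E \<le> real n * E" by (rule mult_right_mono) (use n E0 in auto)
      finally show "exp (-lam\<^sup>2/2) / 2 \<le> real n * E" .
    qed
    finally show ?thesis unfolding lam_def E_def .
  qed
qed

theorem corollary4p2:
  fixes n :: nat and B :: real and pi0 :: "(nat \<times> real \<times> real) measure"
  assumes "n \<ge> 2" and "B > 0"
    and "prob_space pi0"
    and "sets pi0 = sets (count_space UNIV \<Otimes>\<^sub>M (borel \<Otimes>\<^sub>M borel))"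
    and "AE \<theta> in pi0. \<theta> \<in> Theta n B"
  shows "(\<integral>\<^sup>+ \<theta>. emeasure (cpP n (fst \<theta>) (fst (snd \<theta>)) (snd (snd \<theta>)))
            {x \<in> space (cpP n (fst \<theta>) (fst (snd \<theta>)) (snd (snd \<theta>))).
               h_cusum n (B * sqrt (real n) / 2) x \<noteq> (fst (snd \<theta>) \<noteq> snd (snd \<theta>))} \<partial>pi0)
         \<le> ennreal (real n * exp (- real n * B^2 / 8))"
proof -
  interpret p: prob_space pi0 by (rule assms(3))
  have "(\<integral>\<^sup>+ \<theta>. emeasure (cpP n (fst \<theta>) (fst (snd \<theta>)) (snd (snd \<theta>)))
            {x \<in> space (cpP n (fst \<theta>) (fst (snd \<theta>)) (snd (snd \<theta>))).
               h_cusum n (B * sqrt (real n) / 2) x \<noteq> (fst (snd \<theta>) \<noteq> snd (snd \<theta>))} \<partial>pi0)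
        \<le> (\<integral>\<^sup>+ \<theta>. ennreal (real n * exp (- real n * B^2 / 8)) \<partial>pi0)"
  proof (rule nn_integral_mono_AE)
    show "AE \<theta> in pi0. emeasure (cpP n (fst \<theta>) (fst (snd \<theta>)) (snd (snd \<theta>)))
            {x \<in> space (cpP n (fst \<theta>) (fst (snd \<theta>)) (snd (snd \<theta>))).
               h_cusum n (B * sqrt (real n) / 2) x \<noteq> (fst (snd \<theta>) \<noteq> snd (snd \<theta>))}
          \<le> ennreal (real n * exp (- real n * B^2 / 8))"
      using assms(5)
    proof eventually_elim
      case (elim \<theta>)
      obtain \<tau> a b where "\<theta> = (\<tau>, a, b)" by (cases \<theta>) auto
      then show ?case using per_theta[OF assms(1,2)] elim by simp
    qed
  qed
  also have "\<dots> = ennreal (real n * exp (- real n * B^2 / 8))"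
    by (simp add: p.emeasure_space_1)
  finally show ?thesis .
qed

end
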